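(* Let $p\neq q$ be primes, $G_1$ a finite abelian group of order $p^e$ and $G_2$ a finite abelian group of order $q^f$. Let $R_i=\mathbf{Z}[G_i]$, $S_i$ the integral closure of $R_i$ in $\mathbf{Q}[G_i]$, and $I_i=\{s\in S_i: sS_i\subseteq R_i\}$ the conductor of $S_i$ into $R_i$. Regarding all tensor products over $\mathbf{Z}$ as subgroups of $S_1\otimes S_2$, one has $$I_1\otimes I_2=(R_1\otimes I_2)\cap(I_1\otimes R_2).$$ *)

theory Defs
  imports Complex_Main "HOL-Computational_Algebra.Primes" "HOL-Library.Cardinality"
begin

text \<open>The rational group algebra Q[G] of a finite abelian group G (a finite type of
  class ab_group_add, written additively) is modelled as the functions G \<Rightarrow> rat,
  with convolution as multiplication.\<close>

definition gr_mult :: "('a::{ab_group_add,finite} \<Rightarrow> rat) \<Rightarrow> ('a \<Rightarrow> rat) \<Rightarrow> ('a \<Rightarrow> rat)" where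
  "gr_mult x y = (\<lambda>g. \<Sum>h\<in>UNIV. x h * y (g - h))"

definition gr_one :: "'a::{ab_group_add,finite} \<Rightarrow> rat" where
  "gr_one = (\<lambda>g. if g = 0 then 1 else 0)"

primrec gr_pow :: "('a::{ab_group_add,finite} \<Rightarrow> rat) \<Rightarrow> nat \<Rightarrow> ('a \<Rightarrow> rat)" where
  "gr_pow x 0 = gr_one"
| "gr_pow x (Suc n) = gr_mult x (gr_pow x n)"

definition ZG :: "('a::{ab_group_add,finite} \<Rightarrow> rat) set" where
  "ZG = {x. \<forall>g. x g \<in> \<int>}"

definition integral_over :: "('a::{ab_group_add,finite} \<Rightarrow> rat) set \<Rightarrow> ('a \<Rightarrow> rat) \<Rightarrow> bool" where
  "integral_over R s \<longleftrightarrow> (\<exists>n c. (\<forall>k<n. c k \<in> R) \<and>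
      (\<forall>g. gr_pow s n g + (\<Sum>k<n. gr_mult (c k) (gr_pow s k) g) = 0))"

definition SG :: "('a::{ab_group_add,finite} \<Rightarrow> rat) set" where
  "SG = {s. integral_over ZG s}"

definition conductor :: "('a::{ab_group_add,finite} \<Rightarrow> rat) set" where
  "conductor = {s \<in> SG. \<forall>t\<in>SG. gr_mult s t \<in> ZG}"

text \<open>Image of A \<otimes>_Z B inside Q[G1] \<otimes>_Q Q[G2] = Q[G1 \<times> G2]:
  the additive subgroup generated by the elementary tensors a \<otimes> b,
  where (a \<otimes> b)(g,h) = a g * b h.\<close>
definition tensor :: "('a::{ab_group_add,finite} \<Rightarrow> rat) set \<Rightarrow> ('b::{ab_group_add,finite} \<Rightarrow> rat) set
     \<Rightarrow> ('a \<times> 'b \<Rightarrow> rat) set" where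
  "tensor A B = {t. \<exists>n (k::nat \<Rightarrow> int) a b. (\<forall>i<n. a i \<in> A \<and> b i \<in> B) \<and>
      t = (\<lambda>x. \<Sum>i<n. of_int (k i) * a i (fst x) * b i (snd x))}"

end

theory Submission
  imports Defs
begin


definition zspan :: "'k set \<Rightarrow> ('k \<Rightarrow> 'i \<Rightarrow> rat) \<Rightarrow> ('i \<Rightarrow> rat) set" where
  "zspan K v = {x. \<exists>c::'k\<Rightarrow>int. x = (\<lambda>i. \<Sum>k\<in>K. of_int (c k) * v k i)}"

lemma zspan_gen: "k \<in> K \<Longrightarrow> finite K \<Longrightarrow> v k \<in> zspan K v"
proof -
  assume k: "k \<in> K" and f: "finite K"
  have "v k = (\<lambda>i. \<Sum>k'\<in>K. of_int (if k' = k then 1 else 0) * v k' i)"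
  proof
    fix i
    have "(\<Sum>k'\<in>K. of_int (if k' = k then 1 else 0) * v k' i) = (\<Sum>k'\<in>K. if k' = k then v k' i else 0)"
      by (rule sum.cong) auto
    also have "\<dots> = v k i" using k f by (simp add: sum.delta)
    finally show "v k i = (\<Sum>k'\<in>K. of_int (if k' = k then 1 else 0) * v k' i)" by simp
  qed
  thus ?thesis unfolding zspan_def by (intro CollectI exI[of _ "\<lambda>k'. if k' = k then 1 else 0"])
qed

lemma zspan_comb:
  fixes K :: "'k set" and J :: "'j set" and c :: "'j \<Rightarrow> int"
  assumes "finite J" "\<forall>j\<in>J. f j \<in> zspan K v"
  shows "(\<lambda>i. \<Sum>j\<in>J. of_int (c j) * f j i) \<in> zspan K v"
proof -
  from assms(2) have "\<forall>j\<in>J. \<exists>d::'k\<Rightarrow>int. f j = (\<lambda>i. \<Sum>k\<in>K. of_int (d k) * v k i)"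
    unfolding zspan_def by blast
  then obtain d where d: "\<forall>j\<in>J. f j = (\<lambda>i. \<Sum>k\<in>K. of_int (d j k) * v k i)"
    by metis
  have "(\<lambda>i. \<Sum>j\<in>J. of_int (c j) * f j i) = (\<lambda>i. \<Sum>k\<in>K. of_int (\<Sum>j\<in>J. c j * d j k) * v k i)"
  proof
    fix i
    have "(\<Sum>j\<in>J. of_int (c j) * f j i) = (\<Sum>j\<in>J. \<Sum>k\<in>K. of_int (c j) * (of_int (d j k) * v k i))"
      using d by (simp add: sum_distrib_left)
    also have "\<dots> = (\<Sum>k\<in>K. \<Sum>j\<in>J. of_int (c j) * (of_int (d j k) * v k i))"
      by (rule sum.swap)
    also have "\<dots> = (\<Sum>k\<in>K. of_int (\<Sum>j\<in>J. c j * d j k) * v k i)"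
      by (simp add: sum_distrib_right mult.assoc)
    finally show "(\<Sum>j\<in>J. of_int (c j) * f j i) = (\<Sum>k\<in>K. of_int (\<Sum>j\<in>J. c j * d j k) * v k i)" .
  qed
  thus ?thesis unfolding zspan_def by (intro CollectI exI[of _ "\<lambda>k. \<Sum>j\<in>J. c j * d j k"])
qed

lemma zspan_mono:
  assumes "finite K" "\<forall>k\<in>K. v k \<in> zspan J b"
  shows "zspan K v \<subseteq> zspan J b"
  using zspan_comb[OF assms(1), of v J b] assms(2) unfolding zspan_def[of K v] by auto

lemma zspan_support:
  assumes "x \<in> zspan K v" "\<forall>k\<in>K. v k i = 0"
  shows "x i = 0"
  using assms unfolding zspan_def by auto

lemma common_denom:
  fixes r :: "'k \<Rightarrow> rat"
  assumes "finite K"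
  shows "\<exists>D::int. D > 0 \<and> (\<forall>k\<in>K. of_int D * r k \<in> \<int>)"
  using assms
proof (induction K rule: finite_induct)
  case empty
  then show ?case by (rule_tac x=1 in exI) auto
next
  case (insert k K)
  then obtain D where D: "D > 0" "\<forall>k\<in>K. of_int D * r k \<in> \<int>" by blast
  obtain a b where ab: "quotient_of (r k) = (a, b)" by fastforce
  have b: "b > 0" using quotient_of_denom_pos[OF ab] .
  have rk: "r k = of_int a / of_int b" using quotient_of_div[OF ab] .
  have "\<forall>k'\<in>insert k K. of_int (D * b) * r k' \<in> \<int>"
  proof
    fix k' assume "k' \<in> insert k K"
    then show "of_int (D * b) * r k' \<in> \<int>"
    proof
      assume "k' = k"
      have "of_int b * r k = of_int a" using rk b by simp
      then have "of_int (D * b) * r k' = of_int (D * a)" using \<open>k' = k\<close> by (simp add: ac_simps)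
      then show ?thesis by (metis Ints_of_int)
    next
      assume "k' \<in> K"
      then have "of_int D * r k' \<in> \<int>" using D by blast
      then have "of_int b * (of_int D * r k') \<in> \<int>" by simp
      then show ?thesis by (simp add: ac_simps)
    qed
  qed
  then show ?case using D b by (rule_tac x="D*b" in exI) simp
qed

lemma finite_bezout:
  fixes z :: "'k \<Rightarrow> int"
  assumes "finite K"
  shows "\<exists>c. (\<Sum>k\<in>K. c k * z k) = Gcd (z ` K)"
  using assms
proof (induction K rule: finite_induct)
  case empty
  then show ?case by simp
next
  case (insert k K)
  then obtain c where c: "(\<Sum>k\<in>K. c k * z k) = Gcd (z ` K)" by blast
  obtain u v where uv: "u * z k + v * Gcd (z ` K) = gcd (z k) (Gcd (z ` K))"
    using bezout_int by blast
  define c' where "c' = (\<lambda>j. if j = k then u else v * c j)"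
  have "(\<Sum>j\<in>insert k K. c' j * z j) = u * z k + (\<Sum>j\<in>K. v * c j * z j)"
    using insert.hyps by (simp add: c'_def cong: sum.cong) (auto intro!: sum.cong)
  also have "(\<Sum>j\<in>K. v * c j * z j) = v * Gcd (z ` K)"
    using c by (simp add: sum_distrib_left[symmetric] mult.assoc)
  finally show ?case using uv by (rule_tac x=c' in exI) simp
qed

lemma hermite:
  fixes I :: "'i set" and K :: "'k set" and v :: "'k \<Rightarrow> 'i \<Rightarrow> rat"
  assumes "finite I" "finite K" "\<forall>k\<in>K. \<forall>i. i \<notin> I \<longrightarrow> v k i = 0"
  shows "\<exists>J b. J \<subseteq> I \<and> (\<forall>j\<in>J. b j \<in> zspan K v)
     \<and> (\<forall>k\<in>K. v k \<in> zspan J b)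
     \<and> (\<forall>a::'i\<Rightarrow>rat. (\<forall>x. (\<Sum>j\<in>J. a j * b j x) = 0) \<longrightarrow> (\<forall>j\<in>J. a j = 0))"
  using assms(1,3)
proof (induction I arbitrary: v rule: finite_induct)
  case empty
  then have "\<forall>k\<in>K. v k = (\<lambda>x. 0)" by auto
  then have "\<forall>k\<in>K. v k \<in> zspan {} b" for b :: "'i \<Rightarrow> 'i \<Rightarrow> rat"
    unfolding zspan_def by auto
  then show ?case by (rule_tac x="{}" in exI) auto
next
  case (insert i I)
  obtain D :: int where D: "D > 0" "\<forall>k\<in>K. of_int D * v k i \<in> \<int>"
    using common_denom[OF assms(2), of "\<lambda>k. v k i"] by blast
  have "\<forall>k\<in>K. \<exists>z::int. of_int D * v k i = of_int z" using D(2) Ints_cases by metis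
  then obtain z :: "'k \<Rightarrow> int" where z: "\<forall>k\<in>K. of_int D * v k i = of_int (z k)" by metis
  obtain c where c: "(\<Sum>k\<in>K. c k * z k) = Gcd (z ` K)" using finite_bezout[OF assms(2)] by blast
  define g where "g = Gcd (z ` K)"
  define m0 where "m0 = (\<lambda>x. \<Sum>k\<in>K. of_int (c k) * v k x)"
  have m0z: "m0 \<in> zspan K v" unfolding m0_def zspan_def by blast
  have vki: "v k i = of_int (z k) / of_int D" if "k \<in> K" for k
    using z that D(1) by (simp add: field_simps)
  have m0i: "m0 i = of_int g / of_int D"
  proof -
    have "m0 i = (\<Sum>k\<in>K. of_int (c k * z k) / of_int D)"
      unfolding m0_def using vki by (auto intro!: sum.cong)
    also have "\<dots> = of_int (\<Sum>k\<in>K. c k * z k) / of_int D"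
      by (simp add: sum_divide_distrib)
    finally show ?thesis using c g_def by simp
  qed
  have gdvd: "g dvd z k" if "k \<in> K" for k unfolding g_def using that by (simp add: Gcd_dvd)
  show ?case
  proof (cases "g = 0")
    case True
    then have "\<forall>k\<in>K. v k i = 0" using gdvd vki by auto
    then have "\<forall>k\<in>K. \<forall>x. x \<notin> I \<longrightarrow> v k x = 0" using insert.prems by (metis insertE)
    from insert.IH[OF this] obtain J b where Jb: "J \<subseteq> I" "(\<forall>j\<in>J. b j \<in> zspan K v)"
     "(\<forall>k\<in>K. v k \<in> zspan J b)"
     "(\<forall>a::'i\<Rightarrow>rat. (\<forall>x. (\<Sum>j\<in>J. a j * b j x) = 0) \<longrightarrow> (\<forall>j\<in>J. a j = 0))" by blast
    then show ?thesis by (rule_tac x=J in exI, rule_tac x=b in exI) auto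
  next
    case False
    define t where "t = (\<lambda>k. z k div g)"
    have tz: "z k = t k * g" if "k \<in> K" for k using gdvd[OF that] t_def by simp
    define w where "w = (\<lambda>k x. v k x - of_int (t k) * m0 x)"
    have wi: "w k i = 0" if "k \<in> K" for k
    proof -
      have "v k i = of_int (t k) * (of_int g / of_int D)"
        using vki[OF that] tz[OF that] by simp
      then show ?thesis unfolding w_def m0i by simp
    qed
    have m0I: "m0 x = 0" if "x \<notin> insert i I" for x
      unfolding m0_def using insert.prems that by auto
    have wsupp: "\<forall>k\<in>K. \<forall>x. x \<notin> I \<longrightarrow> w k x = 0"
    proof (intro ballI allI impI)
      fix k x assume k: "k \<in> K" and x: "x \<notin> I"
      show "w k x = 0"
      proof (cases "x = i")
        case True then show ?thesis using wi k by simp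
      next
        case False then show ?thesis using m0I[of x] insert.prems k x unfolding w_def by simp
      qed
    qed
    from insert.IH[OF wsupp] obtain J b where Jb: "J \<subseteq> I" "(\<forall>j\<in>J. b j \<in> zspan K w)"
     "(\<forall>k\<in>K. w k \<in> zspan J b)"
     "(\<forall>a::'i\<Rightarrow>rat. (\<forall>x. (\<Sum>j\<in>J. a j * b j x) = 0) \<longrightarrow> (\<forall>j\<in>J. a j = 0))" by blast
    have finJ: "finite J" using Jb(1) insert.hyps(1) finite_subset by blast
    have iJ: "i \<notin> J" using Jb(1) insert.hyps(2) by blast
    define b' where "b' = b(i := m0)"
    have wz: "w k \<in> zspan K v" if "k \<in> K" for k
    proof -
      have "w k = (\<lambda>x. \<Sum>j\<in>{True, False}. of_int (if j then 1 else - t k) * (if j then v k else m0) x)"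
        unfolding w_def by auto
      also have "\<dots> \<in> zspan K v"
        by (rule zspan_comb) (use that m0z zspan_gen[OF _ assms(2)] in auto)
      finally show ?thesis .
    qed
    have zw: "zspan K w \<subseteq> zspan K v" by (rule zspan_mono[OF assms(2)]) (use wz in auto)
    have bi: "b j i = 0" if "j \<in> J" for j
      using zspan_support[of "b j" K w i] Jb(2) that wi by auto
    show ?thesis
    proof (rule exI[of _ "insert i J"], rule exI[of _ b'], intro conjI)
      show "insert i J \<subseteq> insert i I" using Jb(1) by auto
      show "\<forall>j\<in>insert i J. b' j \<in> zspan K v"
        using m0z Jb(2) zw iJ unfolding b'_def by auto
      show "\<forall>k\<in>K. v k \<in> zspan (insert i J) b'"
      proof
        fix k assume k: "k \<in> K"
        have bJ: "\<forall>j\<in>J. b j \<in> zspan (insert i J) b'"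
        proof
          fix j assume j: "j \<in> J"
          then have "b' j \<in> zspan (insert i J) b'" using zspan_gen[of j "insert i J" b'] finJ by simp
          moreover have "b' j = b j" using j iJ unfolding b'_def by auto
          ultimately show "b j \<in> zspan (insert i J) b'" by simp
        qed
        have m0J: "m0 \<in> zspan (insert i J) b'"
          using zspan_gen[of i "insert i J" b'] finJ unfolding b'_def by force
        have "w k \<in> zspan (insert i J) b'"
          using zspan_mono[OF finJ bJ] Jb(3) k by blast
        have "v k = (\<lambda>x. \<Sum>j\<in>{True, False}. of_int (if j then 1 else t k) * (if j then w k else m0) x)"
          unfolding w_def by auto
        also have "\<dots> \<in> zspan (insert i J) b'"
          by (rule zspan_comb) (use \<open>w k \<in> zspan (insert i J) b'\<close> m0J in auto)
        finally show "v k \<in> zspan (insert i J) b'" .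
      qed
      show "\<forall>a::'i\<Rightarrow>rat. (\<forall>x. (\<Sum>j\<in>insert i J. a j * b' j x) = 0) \<longrightarrow> (\<forall>j\<in>insert i J. a j = 0)"
      proof (intro allI impI)
        fix a :: "'i \<Rightarrow> rat"
        assume h: "\<forall>x. (\<Sum>j\<in>insert i J. a j * b' j x) = 0"
        have split: "(\<Sum>j\<in>insert i J. a j * b' j x) = a i * m0 x + (\<Sum>j\<in>J. a j * b j x)" for x
          using finJ iJ unfolding b'_def by (auto intro!: sum.cong)
        have "(\<Sum>j\<in>J. a j * b j i) = 0" using bi by simp
        then have "a i * m0 i = 0" using h split[of i] by simp
        moreover have "m0 i \<noteq> 0" using m0i False D(1) by simp
        ultimately have ai: "a i = 0" by simp
        then have "\<forall>x. (\<Sum>j\<in>J. a j * b j x) = 0" using h split by simp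
        then have "\<forall>j\<in>J. a j = 0" using Jb(4) by blast
        then show "\<forall>j\<in>insert i J. a j = 0" using ai by auto
      qed
    qed
  qed
qed

lemma lin_comb:
  fixes l :: "'i::finite \<Rightarrow> 'i \<Rightarrow> rat"
  shows "(\<lambda>i. \<Sum>j\<in>UNIV. l i j * (\<Sum>k\<in>K. of_int (c k) * f k j))
      = (\<lambda>i. \<Sum>k\<in>K. of_int (c k) * (\<Sum>j\<in>UNIV. l i j * f k j))"
proof
  fix i
  have "(\<Sum>j\<in>UNIV. l i j * (\<Sum>k\<in>K. of_int (c k) * f k j))
     = (\<Sum>j\<in>UNIV. \<Sum>k\<in>K. of_int (c k) * (l i j * f k j))"
    by (simp add: sum_distrib_left ac_simps)
  also have "\<dots> = (\<Sum>k\<in>K. \<Sum>j\<in>UNIV. of_int (c k) * (l i j * f k j))" by (rule sum.swap)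
  also have "\<dots> = (\<Sum>k\<in>K. of_int (c k) * (\<Sum>j\<in>UNIV. l i j * f k j))"
    by (simp add: sum_distrib_left)
  finally show "(\<Sum>j\<in>UNIV. l i j * (\<Sum>k\<in>K. of_int (c k) * f k j))
      = (\<Sum>k\<in>K. of_int (c k) * (\<Sum>j\<in>UNIV. l i j * f k j))" .
qed

lemma trace_int:
  fixes l :: "'i::finite \<Rightarrow> 'i \<Rightarrow> rat" and v :: "'k \<Rightarrow> 'i \<Rightarrow> rat"
  assumes finK: "finite K"
    and E: "\<forall>i. (\<lambda>x. if x = i then 1 else 0) \<in> zspan K v"
    and L: "\<forall>k\<in>K. (\<lambda>i. \<Sum>j\<in>UNIV. l i j * v k j) \<in> zspan K v"
  shows "(\<Sum>i\<in>UNIV. l i i) \<in> \<int>"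
proof -
  obtain J b where Jb: "J \<subseteq> (UNIV::'i set)" "(\<forall>j\<in>J. b j \<in> zspan K v)"
     "(\<forall>k\<in>K. v k \<in> zspan J b)"
     "(\<forall>a::'i\<Rightarrow>rat. (\<forall>x. (\<Sum>j\<in>J. a j * b j x) = 0) \<longrightarrow> (\<forall>j\<in>J. a j = 0))"
    using hermite[of UNIV K v] finK by auto
  have finJ: "finite J" by simp
  define Lf where "Lf = (\<lambda>x::'i\<Rightarrow>rat. \<lambda>i. \<Sum>j\<in>UNIV. l i j * x j)"
  have Lz: "Lf x \<in> zspan K v" if xz: "x \<in> zspan K v" for x
  proof -
    obtain c where c: "x = (\<lambda>i. \<Sum>k\<in>K. of_int (c k) * v k i)" using xz unfolding zspan_def by blast
    have "Lf x = (\<lambda>i. \<Sum>k\<in>K. of_int (c k) * Lf (v k) i)"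
      unfolding c Lf_def by (rule lin_comb)
    also have "\<dots> \<in> zspan K v" by (rule zspan_comb[OF finK]) (use L in \<open>auto simp: Lf_def\<close>)
    finally show ?thesis .
  qed
  have KJ: "zspan K v \<subseteq> zspan J b" by (rule zspan_mono[OF finK Jb(3)])
  have "\<forall>j\<in>J. \<exists>A::'i\<Rightarrow>int. Lf (b j) = (\<lambda>i. \<Sum>k\<in>J. of_int (A k) * b k i)"
    using Lz Jb(2) KJ unfolding zspan_def[of J b] by blast
  then obtain A :: "'i \<Rightarrow> 'i \<Rightarrow> int" where A: "\<forall>j\<in>J. Lf (b j) = (\<lambda>i. \<Sum>k\<in>J. of_int (A j k) * b k i)"
    by metis
  have "\<forall>i. \<exists>C::'i\<Rightarrow>int. (\<lambda>x. if x = i then 1 else 0) = (\<lambda>x. \<Sum>j\<in>J. of_int (C j) * b j x)"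
    using E KJ unfolding zspan_def[of J b] by blast
  then obtain C :: "'i \<Rightarrow> 'i \<Rightarrow> int" where C: "\<forall>i. (\<lambda>x. if x = i then 1 else 0) = (\<lambda>x. \<Sum>j\<in>J. of_int (C i j) * b j x)"
    by metis
  have delta: "(\<Sum>i\<in>UNIV. b k i * of_int (C i j)) = (if j = k then 1 else 0)" if k: "k \<in> J" and j: "j \<in> J" for k j
  proof -
    define a where "a = (\<lambda>j. (\<Sum>i\<in>UNIV. b k i * of_int (C i j)) - (if j = k then 1 else 0))"
    have "(\<Sum>j\<in>J. a j * b j x) = 0" for x
    proof -
      have "b k x = (\<Sum>i\<in>UNIV. b k i * (if x = i then 1 else 0))"
        by (simp add: if_distrib sum.delta cong: if_cong)
      also have "\<dots> = (\<Sum>i\<in>UNIV. b k i * (\<Sum>j\<in>J. of_int (C i j) * b j x))"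
        using C by metis
      also have "\<dots> = (\<Sum>i\<in>UNIV. \<Sum>j\<in>J. b k i * of_int (C i j) * b j x)"
        by (simp add: sum_distrib_left ac_simps)
      also have "\<dots> = (\<Sum>j\<in>J. \<Sum>i\<in>UNIV. b k i * of_int (C i j) * b j x)" by (rule sum.swap)
      also have "\<dots> = (\<Sum>j\<in>J. (\<Sum>i\<in>UNIV. b k i * of_int (C i j)) * b j x)"
        by (simp add: sum_distrib_right)
      finally have e1: "b k x = (\<Sum>j\<in>J. (\<Sum>i\<in>UNIV. b k i * of_int (C i j)) * b j x)" .
      have e2: "b k x = (\<Sum>j\<in>J. (if j = k then 1 else 0) * b j x)"
      proof -
        have "(\<Sum>j\<in>J. (if j = k then 1 else 0) * b j x) = (\<Sum>j\<in>J. if j = k then b j x else 0)"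
          by (rule sum.cong) auto
        then show ?thesis using k finJ by (simp add: sum.delta')
      qed
      have "(\<Sum>j\<in>J. a j * b j x) = (\<Sum>j\<in>J. (\<Sum>i\<in>UNIV. b k i * of_int (C i j)) * b j x)
          - (\<Sum>j\<in>J. (if j = k then 1 else 0) * b j x)"
        unfolding a_def by (simp add: left_diff_distrib sum_subtractf)
      then show ?thesis using e1 e2 by simp
    qed
    then have "a j = 0" using Jb(4) j by blast
    then show ?thesis unfolding a_def by simp
  qed
  have "(\<Sum>i\<in>UNIV. l i i) = (\<Sum>i\<in>UNIV. Lf (\<lambda>x. if x = i then 1 else 0) i)"
    unfolding Lf_def by (simp add: if_distrib sum.delta cong: if_cong)
  also have "\<dots> = (\<Sum>i\<in>UNIV. \<Sum>j\<in>J. of_int (C i j) * Lf (b j) i)"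
  proof (rule sum.cong[OF refl])
    fix i
    have "Lf (\<lambda>x. if x = i then 1 else 0) = Lf (\<lambda>x. \<Sum>j\<in>J. of_int (C i j) * b j x)"
      using C by metis
    also have "\<dots> = (\<lambda>i'. \<Sum>j\<in>J. of_int (C i j) * Lf (b j) i')"
      unfolding Lf_def by (rule lin_comb)
    finally show "Lf (\<lambda>x. if x = i then 1 else 0) i = (\<Sum>j\<in>J. of_int (C i j) * Lf (b j) i)" by simp
  qed
  also have "\<dots> = (\<Sum>i\<in>UNIV. \<Sum>j\<in>J. \<Sum>k\<in>J. of_int (A j k) * (b k i * of_int (C i j)))"
    using A by (auto intro!: sum.cong simp: sum_distrib_left ac_simps)
  also have "\<dots> = (\<Sum>j\<in>J. \<Sum>i\<in>UNIV. \<Sum>k\<in>J. of_int (A j k) * (b k i * of_int (C i j)))"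
    by (rule sum.swap)
  also have "\<dots> = (\<Sum>j\<in>J. \<Sum>k\<in>J. of_int (A j k) * (\<Sum>i\<in>UNIV. b k i * of_int (C i j)))"
    by (simp add: sum.swap[of _ UNIV] sum_distrib_left)
  also have "\<dots> = (\<Sum>j\<in>J. \<Sum>k\<in>J. of_int (A j k) * (if j = k then 1 else 0))"
    using delta by (auto intro!: sum.cong)
  also have "\<dots> = (\<Sum>j\<in>J. \<Sum>k\<in>J. if j = k then of_int (A j k) else 0)"
    by (rule sum.cong[OF refl], rule sum.cong) auto
  also have "\<dots> = (\<Sum>j\<in>J. of_int (A j j))"
    using finJ by (simp add: sum.delta)
  also have "\<dots> \<in> \<int>" by (simp add: Ints_sum)
  finally show ?thesis .
qed



definition gdelta :: "'a::{ab_group_add,finite} \<Rightarrow> 'a \<Rightarrow> rat" where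
  "gdelta a = (\<lambda>g. if g = a then 1 else 0)"

lemma gr_mult_comm: "gr_mult x y = gr_mult y x"
  unfolding gr_mult_def
proof
  fix g
  show "(\<Sum>h\<in>UNIV. x h * y (g - h)) = (\<Sum>h\<in>UNIV. y h * x (g - h))"
    by (rule sum.reindex_bij_witness[of _ "\<lambda>h. g - h" "\<lambda>h. g - h"]) (auto simp: mult.commute)
qed

lemma gr_mult_assoc: "gr_mult (gr_mult x y) z = gr_mult x (gr_mult y z)"
proof
  fix g
  have "gr_mult (gr_mult x y) z g = (\<Sum>h\<in>UNIV. \<Sum>k\<in>UNIV. x k * y (h - k) * z (g - h))"
    unfolding gr_mult_def by (simp add: sum_distrib_right)
  also have "\<dots> = (\<Sum>k\<in>UNIV. \<Sum>h\<in>UNIV. x k * y (h - k) * z (g - h))" by (rule sum.swap)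
  also have "\<dots> = (\<Sum>k\<in>UNIV. x k * (\<Sum>m\<in>UNIV. y m * z (g - k - m)))"
  proof (rule sum.cong[OF refl])
    fix k
    have "(\<Sum>h\<in>UNIV. x k * y (h - k) * z (g - h)) = (\<Sum>m\<in>UNIV. x k * y m * z (g - k - m))"
      by (rule sum.reindex_bij_witness[of _ "\<lambda>m. k + m" "\<lambda>h. h - k"]) (auto simp: diff_diff_eq)
    then show "(\<Sum>h\<in>UNIV. x k * y (h - k) * z (g - h)) = x k * (\<Sum>m\<in>UNIV. y m * z (g - k - m))"
      by (simp add: sum_distrib_left mult.assoc)
  qed
  also have "\<dots> = gr_mult x (gr_mult y z) g" unfolding gr_mult_def by simp
  finally show "gr_mult (gr_mult x y) z g = gr_mult x (gr_mult y z) g" .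
qed

lemma gr_mult_delta: "gr_mult (gdelta a) x = (\<lambda>g. x (g - a))"
proof
  fix g
  have "gr_mult (gdelta a) x g = (\<Sum>h\<in>UNIV. if h = a then x (g - h) else 0)"
    unfolding gr_mult_def gdelta_def by (rule sum.cong) auto
  then show "gr_mult (gdelta a) x g = x (g - a)" by simp
qed

lemma gr_mult_delta2: "gr_mult x (gdelta a) = (\<lambda>g. x (g - a))"
  by (subst gr_mult_comm) (rule gr_mult_delta)

lemma gr_one_delta: "gr_one = gdelta 0"
  unfolding gr_one_def gdelta_def by simp

lemma gr_mult_one: "gr_mult gr_one x = x"
  unfolding gr_one_delta gr_mult_delta by simp

lemma gr_mult_one2: "gr_mult x gr_one = x"
  by (subst gr_mult_comm) (rule gr_mult_one)

lemma ZG_mult: "x \<in> ZG \<Longrightarrow> y \<in> ZG \<Longrightarrow> gr_mult x y \<in> ZG"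
  unfolding ZG_def gr_mult_def by (auto intro!: Ints_sum Ints_mult)

lemma one_SG: "gr_one \<in> SG"
proof -
  have "\<forall>g. gr_pow gr_one 1 g + (\<Sum>k<1. gr_mult ((\<lambda>g. - gr_one g)) (gr_pow gr_one k) g) = 0"
    by (simp add: gr_mult_one2)
  moreover have "\<forall>k<1. (\<lambda>g. - gr_one g) \<in> (ZG :: ('a::{ab_group_add,finite} \<Rightarrow> rat) set)"
    unfolding ZG_def gr_one_def by auto
  ultimately show ?thesis unfolding SG_def integral_over_def
    by (intro CollectI exI[of _ 1] exI[of _ "\<lambda>k. (\<lambda>g. - gr_one g)"] conjI)
qed

lemma ZG_SG: "x \<in> ZG \<Longrightarrow> x \<in> SG"
proof -
  assume x: "x \<in> ZG"
  have "\<forall>g. gr_pow x 1 g + (\<Sum>k<1. gr_mult ((\<lambda>g. - x g)) (gr_pow x k) g) = 0"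
    by (simp add: gr_mult_one2)
  moreover have "\<forall>k<1. (\<lambda>g. - x g) \<in> ZG"
    using x unfolding ZG_def by auto
  ultimately show ?thesis unfolding SG_def integral_over_def
    by (intro CollectI exI[of _ 1] exI[of _ "\<lambda>k. (\<lambda>g. - x g)"] conjI)
qed

lemma conductor_ZG: "s \<in> conductor \<Longrightarrow> s \<in> ZG"
proof -
  assume "s \<in> conductor"
  then have "gr_mult s gr_one \<in> ZG" using one_SG unfolding conductor_def by blast
  then show ?thesis by (simp only: gr_mult_one2)
qed

lemma SG_trace:
  fixes s :: "'a::{ab_group_add,finite} \<Rightarrow> rat"
  assumes "s \<in> SG"
  shows "of_nat CARD('a) * s g \<in> \<int>"
proof -
  obtain n c where c: "\<forall>k<n. c k \<in> ZG"
     "\<forall>x. gr_pow s n x + (\<Sum>k<n. gr_mult (c k) (gr_pow s k) x) = 0"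
    using assms unfolding SG_def integral_over_def by blast
  have n0: "n \<noteq> 0"
  proof
    assume "n = 0"
    then have "gr_one (0::'a) = 0" using c(2) by simp
    then show False unfolding gr_one_def by simp
  qed
  define K where "K = (UNIV :: 'a set) \<times> {..<n}"
  have finK: "finite K" unfolding K_def by simp
  define v where "v = (\<lambda>(a, k). gr_mult (gdelta a) (gr_pow s k))"
  define b where "b = - g"
  define w where "w = gr_mult s (gdelta b)"
  define l where "l = (\<lambda>i j. w (i - j))"
  have vv: "v (a, k) = (\<lambda>x. gr_pow s k (x - a))" for a k
    unfolding v_def gr_mult_delta by simp
  have E: "\<forall>i. (\<lambda>x. if x = i then 1 else 0) \<in> zspan K v"
  proof
    fix i
    have "(\<lambda>x. if x = i then 1 else 0) = v (i, 0)"
      unfolding vv by (auto simp: gr_one_def)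
    also have "\<dots> \<in> zspan K v" using zspan_gen[of "(i,0)" K v, OF _ finK] n0 unfolding K_def by simp
    finally show "(\<lambda>x. if x = i then 1 else 0) \<in> zspan K v" .
  qed
  have powS: "gr_pow s (Suc k) = gr_mult s (gr_pow s k)" for k by simp
  have L: "\<forall>kk\<in>K. (\<lambda>i. \<Sum>j\<in>UNIV. l i j * v kk j) \<in> zspan K v"
  proof
    fix kk assume kk: "kk \<in> K"
    obtain a k where akk: "kk = (a, k)" and k: "k < n" using kk unfolding K_def by auto
    have "(\<lambda>i. \<Sum>j\<in>UNIV. l i j * v kk j) = gr_mult (v kk) w"
      unfolding l_def gr_mult_def by (auto simp: mult.commute)
    also have "\<dots> = (\<lambda>x. gr_pow s (Suc k) (x - (a + b)))"
    proof -
      have "gr_mult (v kk) w = gr_mult (gdelta a) (gr_mult (gr_pow s k) (gr_mult s (gdelta b)))"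
        unfolding akk v_def w_def by (simp add: gr_mult_assoc)
      also have "gr_mult (gr_pow s k) (gr_mult s (gdelta b)) = gr_mult (gr_mult s (gr_pow s k)) (gdelta b)"
        by (simp only: gr_mult_assoc[symmetric] gr_mult_comm[of "gr_pow s k" s])
      also have "\<dots> = (\<lambda>x. gr_pow s (Suc k) (x - b))" by (simp add: gr_mult_delta2)
      finally show ?thesis by (simp add: gr_mult_delta algebra_simps)
    qed
    finally have eq: "(\<lambda>i. \<Sum>j\<in>UNIV. l i j * v kk j) = (\<lambda>x. gr_pow s (Suc k) (x - (a + b)))" .
    show "(\<lambda>i. \<Sum>j\<in>UNIV. l i j * v kk j) \<in> zspan K v"
    proof (cases "Suc k < n")
      case True
      then have "(\<lambda>x. gr_pow s (Suc k) (x - (a + b))) = v (a + b, Suc k)" unfolding vv by simp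
      also have "\<dots> \<in> zspan K v" using zspan_gen[of "(a + b, Suc k)" K v, OF _ finK] True unfolding K_def by simp
      finally show ?thesis using eq by simp
    next
      case False
      then have kn: "Suc k = n" using k by simp
      define z where "z = (\<lambda>kk h. \<lfloor>c kk h\<rfloor>)"
      have z: "\<forall>kk<n. \<forall>h. c kk h = of_int (z kk h)"
      proof (intro allI impI)
        fix kk h assume "kk < n"
        then have "c kk h \<in> \<int>" using c(1) unfolding ZG_def by blast
        then show "c kk h = of_int (z kk h)" unfolding z_def by (auto elim: Ints_cases)
      qed
      have "(\<lambda>x. gr_pow s (Suc k) (x - (a + b))) =
          (\<lambda>x. \<Sum>hk\<in>UNIV \<times> {..<n}. of_int (- z (snd hk) (fst hk)) * v (a + b + fst hk, snd hk) x)"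
      proof
        fix x
        have "gr_pow s (Suc k) (x - (a + b)) = - (\<Sum>kk<n. gr_mult (c kk) (gr_pow s kk) (x - (a + b)))"
        proof -
          have "gr_pow s n (x - (a + b)) + (\<Sum>kk<n. gr_mult (c kk) (gr_pow s kk) (x - (a + b))) = 0"
            using c(2) by blast
          then show ?thesis using kn by (simp add: eq_neg_iff_add_eq_0)
        qed
        also have "\<dots> = - (\<Sum>kk<n. \<Sum>h\<in>UNIV. of_int (z kk h) * gr_pow s kk (x - (a + b) - h))"
          unfolding gr_mult_def using z by (auto intro!: sum.cong)
        also have "\<dots> = (\<Sum>kk<n. \<Sum>h\<in>UNIV. of_int (- z kk h) * v (a + b + h, kk) x)"
          unfolding vv by (simp add: sum_negf algebra_simps)
        also have "\<dots> = (\<Sum>h\<in>UNIV. \<Sum>kk<n. of_int (- z kk h) * v (a + b + h, kk) x)"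
          by (rule sum.swap)
        also have "\<dots> = (\<Sum>hk\<in>UNIV \<times> {..<n}. of_int (- z (snd hk) (fst hk)) * v (a + b + fst hk, snd hk) x)"
          by (simp add: sum.cartesian_product case_prod_beta)
        finally show "gr_pow s (Suc k) (x - (a + b)) = (\<Sum>hk\<in>UNIV \<times> {..<n}. of_int (- z (snd hk) (fst hk)) * v (a + b + fst hk, snd hk) x)" .
      qed
      also have "\<dots> \<in> zspan K v"
      proof (rule zspan_comb)
        show "finite ((UNIV::'a set) \<times> {..<n})" by simp
        show "\<forall>j\<in>UNIV \<times> {..<n}. v (a + b + fst j, snd j) \<in> zspan K v"
        proof
          fix j :: "'a \<times> nat" assume "j \<in> UNIV \<times> {..<n}"
          then have "(a + b + fst j, snd j) \<in> K" unfolding K_def by auto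
          then show "v (a + b + fst j, snd j) \<in> zspan K v" using zspan_gen[OF _ finK] by blast
        qed
      qed
      finally show ?thesis using eq by simp
    qed
  qed
  have "(\<Sum>i\<in>UNIV. l i i) \<in> \<int>" by (rule trace_int[OF finK E L])
  moreover have "(\<Sum>i\<in>UNIV. l i i) = of_nat CARD('a) * s g"
    unfolding l_def w_def gr_mult_delta2 b_def by simp
  ultimately show ?thesis by simp
qed



lemma sum_split_add: "(\<Sum>i<n1+n2. f i) = (\<Sum>i<n1. f i) + (\<Sum>i<n2. f (n1 + i))"
  for f :: "nat \<Rightarrow> 'b::comm_monoid_add"
  by (induction n2) (simp_all add: add.assoc)

lemma tensor_mono: "A \<subseteq> A' \<Longrightarrow> B \<subseteq> B' \<Longrightarrow> tensor A B \<subseteq> tensor A' B'"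
  unfolding tensor_def by blast

lemma tensor_add:
  fixes A A' :: "('a::{ab_group_add,finite} \<Rightarrow> rat) set" and B B' :: "('b::{ab_group_add,finite} \<Rightarrow> rat) set"
  assumes "x \<in> tensor A B" "y \<in> tensor A B"
  shows "(\<lambda>z. x z + y z) \<in> tensor A B"
proof -
  obtain n1 :: nat and k1 :: "nat \<Rightarrow> int" and a1 :: "nat \<Rightarrow> 'a \<Rightarrow> rat" and b1 :: "nat \<Rightarrow> 'b \<Rightarrow> rat" where 1: "\<forall>i<n1. a1 i \<in> A \<and> b1 i \<in> B"
    "x = (\<lambda>x. \<Sum>i<n1. of_int (k1 i) * a1 i (fst x) * b1 i (snd x))"
    using assms(1) unfolding tensor_def by blast
  obtain n2 :: nat and k2 :: "nat \<Rightarrow> int" and a2 :: "nat \<Rightarrow> 'a \<Rightarrow> rat" and b2 :: "nat \<Rightarrow> 'b \<Rightarrow> rat" where 2: "\<forall>i<n2. a2 i \<in> A \<and> b2 i \<in> B"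
    "y = (\<lambda>x. \<Sum>i<n2. of_int (k2 i) * a2 i (fst x) * b2 i (snd x))"
    using assms(2) unfolding tensor_def by blast
  define k where "k = (\<lambda>i. if i < n1 then k1 i else k2 (i - n1))"
  define a where "a = (\<lambda>i. if i < n1 then a1 i else a2 (i - n1))"
  define b where "b = (\<lambda>i. if i < n1 then b1 i else b2 (i - n1))"
  have "\<forall>i<n1+n2. a i \<in> A \<and> b i \<in> B"
    using 1(1) 2(1) unfolding a_def b_def by auto
  moreover have "(\<lambda>z. x z + y z) = (\<lambda>x. \<Sum>i<n1+n2. of_int (k i) * a i (fst x) * b i (snd x))"
  proof
    fix z
    show "x z + y z = (\<Sum>i<n1+n2. of_int (k i) * a i (fst z) * b i (snd z))"
      unfolding sum_split_add 1(2) 2(2) k_def a_def b_def by simp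
  qed
  ultimately show ?thesis unfolding tensor_def
    by (intro CollectI exI[of _ "n1+n2"] exI[of _ k] exI[of _ a] exI[of _ b] conjI)
qed

lemma tensor_scale_left:
  fixes A A' :: "('a::{ab_group_add,finite} \<Rightarrow> rat) set" and B B' :: "('b::{ab_group_add,finite} \<Rightarrow> rat) set"
  assumes "x \<in> tensor A B" "\<forall>a\<in>A. (\<lambda>g. of_int m * a g) \<in> A'"
  shows "(\<lambda>z. of_int m * x z) \<in> tensor A' B"
proof -
  obtain n :: nat and k :: "nat \<Rightarrow> int" and a :: "nat \<Rightarrow> 'a \<Rightarrow> rat" and b :: "nat \<Rightarrow> 'b \<Rightarrow> rat" where 1: "\<forall>i<n. a i \<in> A \<and> b i \<in> B"
    "x = (\<lambda>x. \<Sum>i<n. of_int (k i) * a i (fst x) * b i (snd x))"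
    using assms(1) unfolding tensor_def by blast
  have "\<forall>i<n. (\<lambda>g. of_int m * a i g) \<in> A' \<and> b i \<in> B" using 1(1) assms(2) by blast
  moreover have "(\<lambda>z. of_int m * x z) = (\<lambda>x. \<Sum>i<n. of_int (k i) * (\<lambda>g. of_int m * a i g) (fst x) * b i (snd x))"
    unfolding 1(2) by (simp add: sum_distrib_left ac_simps)
  ultimately show ?thesis unfolding tensor_def
    by (intro CollectI exI[of _ n] exI[of _ k] exI[of _ "\<lambda>i. (\<lambda>g. of_int m * a i g)"] exI[of _ b] conjI)
qed

lemma tensor_scale_right:
  fixes A A' :: "('a::{ab_group_add,finite} \<Rightarrow> rat) set" and B B' :: "('b::{ab_group_add,finite} \<Rightarrow> rat) set"
  assumes "x \<in> tensor A B" "\<forall>b\<in>B. (\<lambda>g. of_int m * b g) \<in> B'"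
  shows "(\<lambda>z. of_int m * x z) \<in> tensor A B'"
proof -
  obtain n :: nat and k :: "nat \<Rightarrow> int" and a :: "nat \<Rightarrow> 'a \<Rightarrow> rat" and b :: "nat \<Rightarrow> 'b \<Rightarrow> rat" where 1: "\<forall>i<n. a i \<in> A \<and> b i \<in> B"
    "x = (\<lambda>x. \<Sum>i<n. of_int (k i) * a i (fst x) * b i (snd x))"
    using assms(1) unfolding tensor_def by blast
  have "\<forall>i<n. a i \<in> A \<and> (\<lambda>g. of_int m * b i g) \<in> B'" using 1(1) assms(2) by blast
  moreover have "(\<lambda>z. of_int m * x z) = (\<lambda>x. \<Sum>i<n. of_int (k i) * a i (fst x) * (\<lambda>g. of_int m * b i g) (snd x))"
    unfolding 1(2) by (simp add: sum_distrib_left ac_simps)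
  ultimately show ?thesis unfolding tensor_def
    by (intro CollectI exI[of _ n] exI[of _ k] exI[of _ a] exI[of _ "\<lambda>i. (\<lambda>g. of_int m * b i g)"] conjI)
qed

lemma tensor_smult:
  fixes A A' :: "('a::{ab_group_add,finite} \<Rightarrow> rat) set" and B B' :: "('b::{ab_group_add,finite} \<Rightarrow> rat) set"
  assumes "x \<in> tensor A B"
  shows "(\<lambda>z. of_int m * x z) \<in> tensor A B"
proof -
  obtain n :: nat and k :: "nat \<Rightarrow> int" and a :: "nat \<Rightarrow> 'a \<Rightarrow> rat" and b :: "nat \<Rightarrow> 'b \<Rightarrow> rat" where 1: "\<forall>i<n. a i \<in> A \<and> b i \<in> B"
    "x = (\<lambda>x. \<Sum>i<n. of_int (k i) * a i (fst x) * b i (snd x))"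
    using assms(1) unfolding tensor_def by blast
  have "(\<lambda>z. of_int m * x z) = (\<lambda>x. \<Sum>i<n. of_int (m * k i) * a i (fst x) * b i (snd x))"
    unfolding 1(2) by (simp add: sum_distrib_left ac_simps)
  then show ?thesis using 1(1) unfolding tensor_def
    by (intro CollectI exI[of _ n] exI[of _ "\<lambda>i. m * k i"] exI[of _ a] exI[of _ b] conjI)
qed

lemma scale_conductor:
  fixes a :: "'a::{ab_group_add,finite} \<Rightarrow> rat"
  assumes "a \<in> ZG"
  shows "(\<lambda>g. of_int (int CARD('a)) * a g) \<in> conductor"
proof -
  define m :: rat where "m = of_nat CARD('a)"
  have ma: "(\<lambda>g. m * a g) \<in> ZG" using assms unfolding ZG_def m_def by auto
  have "\<forall>t\<in>SG. gr_mult (\<lambda>g. m * a g) t \<in> ZG"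
  proof
    fix t :: "'a \<Rightarrow> rat" assume t: "t \<in> SG"
    have mt: "(\<lambda>g. m * t g) \<in> ZG" using SG_trace[OF t] unfolding ZG_def m_def by auto
    have "gr_mult (\<lambda>g. m * a g) t = gr_mult a (\<lambda>g. m * t g)"
      unfolding gr_mult_def by (simp add: ac_simps)
    then show "gr_mult (\<lambda>g. m * a g) t \<in> ZG" using ZG_mult[OF assms mt] by simp
  qed
  then have "(\<lambda>g. m * a g) \<in> conductor" using ZG_SG[OF ma] unfolding conductor_def by blast
  then show ?thesis unfolding m_def by simp
qed

theorem mainTheorem11:
  fixes p q e f :: nat
  assumes "prime p" and "prime q" and "p \<noteq> q"
    and "card (UNIV :: 'a::{ab_group_add,finite} set) = p ^ e"
    and "card (UNIV :: 'b::{ab_group_add,finite} set) = q ^ f"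
  shows "tensor (conductor :: ('a \<Rightarrow> rat) set) (conductor :: ('b \<Rightarrow> rat) set)
       = tensor (ZG :: ('a \<Rightarrow> rat) set) (conductor :: ('b \<Rightarrow> rat) set)
         \<inter> tensor (conductor :: ('a \<Rightarrow> rat) set) (ZG :: ('b \<Rightarrow> rat) set)"
proof
  have cz: "(conductor :: ('a \<Rightarrow> rat) set) \<subseteq> ZG" "(conductor :: ('b \<Rightarrow> rat) set) \<subseteq> ZG"
    using conductor_ZG by blast+
  show "tensor (conductor :: ('a \<Rightarrow> rat) set) (conductor :: ('b \<Rightarrow> rat) set)
       \<subseteq> tensor (ZG :: ('a \<Rightarrow> rat) set) (conductor :: ('b \<Rightarrow> rat) set)
         \<inter> tensor (conductor :: ('a \<Rightarrow> rat) set) (ZG :: ('b \<Rightarrow> rat) set)"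
    using tensor_mono[OF cz(1) order_refl] tensor_mono[OF order_refl cz(2)] by blast
next
  define m1 where "m1 = int CARD('a)"
  define m2 where "m2 = int CARD('b)"
  have "coprime (p ^ e) (q ^ f)"
    using assms(1,2,3) by (simp add: primes_coprime)
  then have "coprime m1 m2" unfolding m1_def m2_def using assms(4,5) by simp
  then obtain u v where uv: "u * m1 + v * m2 = 1"
    using bezout_int[of m1 m2] by (metis coprime_imp_gcd_eq_1)
  show "tensor (ZG :: ('a \<Rightarrow> rat) set) (conductor :: ('b \<Rightarrow> rat) set)
         \<inter> tensor (conductor :: ('a \<Rightarrow> rat) set) (ZG :: ('b \<Rightarrow> rat) set)
       \<subseteq> tensor (conductor :: ('a \<Rightarrow> rat) set) (conductor :: ('b \<Rightarrow> rat) set)"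
  proof
    fix x assume x: "x \<in> tensor (ZG :: ('a \<Rightarrow> rat) set) (conductor :: ('b \<Rightarrow> rat) set)
         \<inter> tensor (conductor :: ('a \<Rightarrow> rat) set) (ZG :: ('b \<Rightarrow> rat) set)"
    have x1: "(\<lambda>z. of_int m1 * x z) \<in> tensor (conductor :: ('a \<Rightarrow> rat) set) (conductor :: ('b \<Rightarrow> rat) set)"
      by (rule tensor_scale_left) (use x scale_conductor in \<open>auto simp: m1_def\<close>)
    have x2: "(\<lambda>z. of_int m2 * x z) \<in> tensor (conductor :: ('a \<Rightarrow> rat) set) (conductor :: ('b \<Rightarrow> rat) set)"
      by (rule tensor_scale_right) (use x scale_conductor in \<open>auto simp: m2_def\<close>)
    have "x = (\<lambda>z. of_int u * (of_int m1 * x z) + of_int v * (of_int m2 * x z))"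
    proof
      fix z
      have "of_int u * (of_int m1 * x z) + of_int v * (of_int m2 * x z) = of_int (u * m1 + v * m2) * x z"
        by (simp add: algebra_simps)
      then show "x z = of_int u * (of_int m1 * x z) + of_int v * (of_int m2 * x z)" using uv by simp
    qed
    also have "\<dots> \<in> tensor (conductor :: ('a \<Rightarrow> rat) set) (conductor :: ('b \<Rightarrow> rat) set)"
      by (rule tensor_add[OF tensor_smult[OF x1] tensor_smult[OF x2]])
    finally show "x \<in> tensor (conductor :: ('a \<Rightarrow> rat) set) (conductor :: ('b \<Rightarrow> rat) set)" .
  qed
qed

end
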